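(* Let $(\mathcal X,\mathcal B,\pi)$ be a measure space with $\pi$ $\sigma$-finite, $r$ measurable, $\{\varepsilon(x)\}$ an arbitrary real-valued random field, $\alpha\in(0,1)$, and $p_{\rm ref}\in\mathcal P_\pi$. Assume $0<Q_*<\infty$ with $Q\le Q_*$ everywhere, and $$\alpha>\Bigl(\int\frac{Q_*}{Q_*-Q(x)}\,p_{\rm ref}(x)\,\pi(dx)\Bigr)^{-1}.$$ Then the operator $L_N$ has a unique fixed point $w_*$ in $\mathcal P_{\mathbb P_{\rm ref}}$, and the constant $c_*:=\langle w_*,Q\rangle_{\rm ref}$ lies in $\bigl((1-\alpha)Q_*,\,Q_*\bigr]$.
   Context: $\mathcal P_\pi$ = probability densities w.r.t. $\pi$. $Q(x):=e^{r(x)}\mathbb E[e^{\varepsilon(x)}]$, $Q_*:=\operatorname*{ess\,sup}_\pi Q$; in the displayed condition the integrand is $+\infty$ where $Q=Q_*$ and the reciprocal of $+\infty$ is $0$. $\mathbb P_{\rm ref}(dx)=p_{\rm ref}(x)\pi(dx)$; $\mathcal P_{\mathbb P_{\rm ref}}$ = probability densities w.r.t. $\mathbb P_{\rm ref}$; $\langle f,g\rangle_{\rm ref}=\int fg\,d\mathbb P_{\rm ref}$. On the cone $\mathcal K=\{f\in L^1(\mathbb P_{\rm ref}):f>0\ \mathbb P_{\rm ref}\text{-a.s.}\}$, $L[f]=\alpha\langle f,Q\rangle_{\rm ref}+(1-\alpha)fQ$ and $L_N[f]=L[f]/\langle f,Q\rangle_{\rm ref}$. *)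

theory Defs
  imports "HOL-Probability.Probability"
begin

definition Qfun :: "('a \<Rightarrow> real) \<Rightarrow> ('a \<Rightarrow> 'w \<Rightarrow> real) \<Rightarrow> 'w measure \<Rightarrow> 'a \<Rightarrow> ennreal" where
  "Qfun r eps P x = ennreal (exp (r x)) * (\<integral>\<^sup>+ \<omega>. ennreal (exp (eps x \<omega>)) \<partial>P)"

definition prob_densities :: "'a measure \<Rightarrow> ('a \<Rightarrow> real) set" where
  "prob_densities M = {f. f \<in> borel_measurable M \<and> (AE x in M. 0 \<le> f x)
                          \<and> (\<integral>\<^sup>+ x. ennreal (f x) \<partial>M) = 1}"

definition Pref :: "'a measure \<Rightarrow> ('a \<Rightarrow> real) \<Rightarrow> 'a measure" where
  "Pref M p = density M (\<lambda>x. ennreal (p x))"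

definition inner_ref :: "'a measure \<Rightarrow> ('a \<Rightarrow> real) \<Rightarrow> ('a \<Rightarrow> real) \<Rightarrow> ('a \<Rightarrow> real) \<Rightarrow> real" where
  "inner_ref M p f g = (\<integral> x. f x * g x \<partial>(Pref M p))"

definition pos_cone :: "'a measure \<Rightarrow> ('a \<Rightarrow> real) \<Rightarrow> ('a \<Rightarrow> real) set" where
  "pos_cone M p = {f. integrable (Pref M p) f \<and> (AE x in Pref M p. 0 < f x)}"

definition Lop :: "'a measure \<Rightarrow> ('a \<Rightarrow> real) \<Rightarrow> real \<Rightarrow> ('a \<Rightarrow> real) \<Rightarrow> ('a \<Rightarrow> real) \<Rightarrow> 'a \<Rightarrow> real" where
  "Lop M p \<alpha> Q f x = \<alpha> * inner_ref M p f Q + (1 - \<alpha>) * f x * Q x"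

definition LNop :: "'a measure \<Rightarrow> ('a \<Rightarrow> real) \<Rightarrow> real \<Rightarrow> ('a \<Rightarrow> real) \<Rightarrow> ('a \<Rightarrow> real) \<Rightarrow> 'a \<Rightarrow> real" where
  "LNop M p \<alpha> Q f x = Lop M p \<alpha> Q f x / inner_ref M p f Q"

end

theory Submission
  imports Defs
begin


lemma w_anti:
  fixes a q c c' :: real
  assumes "0 < a" "0 \<le> b" "0 \<le> q" "b*q < c" "c \<le> c'"
  shows "a*c'/(c'-b*q) \<le> a*c/(c-b*q)"
proof -
  have p1: "c - b*q > 0" "c' - b*q > 0" using assms by auto
  have "a*c'*(c-b*q) \<le> a*c*(c'-b*q)"
  proof -
    have "a*c'*(c-b*q) - a*c*(c'-b*q) = a*b*q*(c - c')" by (simp add: algebra_simps)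
    also have "\<dots> \<le> 0" using assms by (simp add: mult_nonneg_nonpos)
    finally show ?thesis by simp
  qed
  then show ?thesis using p1 by (simp add: divide_simps)
qed

lemma w_lip:
  fixes a b q c c' c0 S :: real
  assumes "0 < a" "0 \<le> b" "0 \<le> q" "q \<le> S" "b*S < c0" "c0 \<le> c" "c0 \<le> c'"
  shows "\<bar>a*c/(c-b*q) - a*c'/(c'-b*q)\<bar> \<le> (a*b*S/(c0-b*S)^2) * \<bar>c - c'\<bar>"
proof -
  have bq: "b*q \<le> b*S" using assms by (simp add: mult_left_mono)
  have p1: "c - b*q \<ge> c0 - b*S" "c' - b*q \<ge> c0 - b*S" "c0 - b*S > 0" using assms bq by auto
  have eq: "a*c/(c-b*q) - a*c'/(c'-b*q) = a*b*q*(c'-c)/((c-b*q)*(c'-b*q))"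
    using p1 by (simp add: divide_simps) (simp add: algebra_simps)
  have d: "(c0-b*S)^2 \<le> (c-b*q)*(c'-b*q)"
    unfolding power2_eq_square using p1 by (intro mult_mono) auto
  have n: "a*b*q*\<bar>c'-c\<bar> \<le> a*b*S*\<bar>c-c'\<bar>"
    using assms by (simp add: mult_left_mono mult_right_mono abs_minus_commute)
  have "\<bar>a*c/(c-b*q) - a*c'/(c'-b*q)\<bar> = a*b*q*\<bar>c'-c\<bar>/((c-b*q)*(c'-b*q))"
    unfolding eq using p1 assms by (simp add: abs_mult abs_divide)
  also have "\<dots> \<le> a*b*S*\<bar>c-c'\<bar>/((c-b*q)*(c'-b*q))"
    using n p1 by (intro divide_right_mono) auto
  also have "\<dots> \<le> a*b*S*\<bar>c-c'\<bar>/((c0-b*S)^2)"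
    using d p1 assms by (intro divide_left_mono) (auto intro!: mult_nonneg_nonneg mult_pos_pos)
  finally show ?thesis by simp
qed

lemma exist_c:
  fixes N :: "'a measure" and q :: "'a \<Rightarrow> real" and S \<alpha> :: real
  assumes N: "prob_space N" and qm: "q \<in> borel_measurable N"
    and q0: "\<And>x. x \<in> space N \<Longrightarrow> 0 \<le> q x" and qS: "\<And>x. x \<in> space N \<Longrightarrow> q x \<le> S"
    and S: "0 < S" and a0: "0 < \<alpha>" and a1: "\<alpha> < 1"
    and cond: "1 < (\<integral>\<^sup>+x. ennreal \<alpha> * (if q x = S then \<infinity> else ennreal (S/(S-q x))) \<partial>N)"
  shows "\<exists>c. (1-\<alpha>)*S < c \<and> (\<integral>x. \<alpha>*c/(c-(1-\<alpha>)*q x) \<partial>N) = 1"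
proof -
  interpret prob_space N by fact
  note [measurable] = qm
  define \<beta> where "\<beta> = 1 - \<alpha>"
  have b0: "0 < \<beta>" "\<beta> < 1" using a0 a1 by (auto simp: \<beta>_def)
  define w where "w c x = \<alpha>*c/(c-\<beta>*q x)" for c x
  define G where "G c = (\<integral>x. w c x \<partial>N)" for c
  have bq: "\<beta>*q x \<le> \<beta>*S" if "x \<in> space N" for x using qS[OF that] b0 by simp
  have wm[measurable]: "w c \<in> borel_measurable N" for c unfolding w_def by measurable
  have wpos: "0 < w c x" if "\<beta>*S < c" "x \<in> space N" for c x
  proof -
    have "0 < \<beta>*S" using b0 S by simp
    then have "0 < c" using that by linarith
    moreover have "\<beta>*q x < c" using bq[OF that(2)] that by linarith
    ultimately show ?thesis unfolding w_def using a0 by (intro divide_pos_pos) auto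
  qed
  have wbd: "w c x \<le> \<alpha>*c/(c-\<beta>*S)" if "\<beta>*S < c" "x \<in> space N" for c x
  proof -
    have "0 < \<beta>*S" using b0 S by simp
    then have "0 < c" using that by linarith
    then show ?thesis unfolding w_def using that bq[OF that(2)] a0
      by (intro divide_left_mono) (auto intro!: mult_pos_pos)
  qed
  have wint: "integrable N (w c)" if "\<beta>*S < c" for c
  proof (rule integrable_const_bound)
    show "AE x in N. norm (w c x) \<le> \<alpha>*c/(c-\<beta>*S)"
      using wpos[OF that] wbd[OF that] by (intro AE_I2) (simp add: less_imp_le)
  qed simp
  have Glip: "\<bar>G c - G c'\<bar> \<le> (\<alpha>*\<beta>*S/(c0-\<beta>*S)^2) * \<bar>c - c'\<bar>"
    if "\<beta>*S < c0" "c0 \<le> c" "c0 \<le> c'" for c c' c0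
  proof -
    have "\<bar>G c - G c'\<bar> = norm (\<integral>x. w c x - w c' x \<partial>N)"
      unfolding G_def using that
      by (subst Bochner_Integration.integral_diff) (auto intro!: wint)
    also have "\<dots> \<le> (\<integral>x. norm (w c x - w c' x) \<partial>N)" by (rule integral_norm_bound)
    also have "\<dots> \<le> (\<integral>x. (\<alpha>*\<beta>*S/(c0-\<beta>*S)^2) * \<bar>c - c'\<bar> \<partial>N)"
      apply (rule integral_mono)
      using that apply (auto intro!: Bochner_Integration.integrable_diff wint)[2]
      unfolding w_def using w_lip[of \<alpha> \<beta>] that a0 b0 q0 qS by auto
    also have "\<dots> = (\<alpha>*\<beta>*S/(c0-\<beta>*S)^2) * \<bar>c - c'\<bar>" by (simp add: prob_space)
    finally show ?thesis .
  qed
  define cn where "cn n = \<beta>*S + S/Suc n" for n :: nat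
  have cn_gt: "\<beta>*S < cn n" for n unfolding cn_def using S by simp
  have cn_dec: "cn (Suc n) \<le> cn n" for n unfolding cn_def using S
    by (simp add: frac_le)
  have cn_le: "cn n \<le> 2*S" for n
  proof -
    have "S/Suc n \<le> S" using S by (simp add: divide_le_eq)
    moreover have "\<beta>*S \<le> S" using b0 S by simp
    ultimately show ?thesis unfolding cn_def by linarith
  qed
  have cn_lim: "cn \<longlonglongrightarrow> \<beta>*S"
  proof -
    have "(\<lambda>n. S * inverse (real (Suc n))) \<longlonglongrightarrow> S * 0"
      by (intro tendsto_mult tendsto_const LIMSEQ_inverse_real_of_nat)
    then have "(\<lambda>n. \<beta>*S + S * inverse (real (Suc n))) \<longlonglongrightarrow> \<beta>*S + S*0"
      by (intro tendsto_add tendsto_const)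
    then show ?thesis unfolding cn_def by (simp add: divide_inverse)
  qed
  define f where "f n x = (if x \<in> space N then ennreal (w (cn n) x) else 0)" for n x
  have finc: "incseq (\<lambda>n x. f n x)"
  proof (rule incseq_SucI, rule le_funI)
    fix n x
    show "f n x \<le> f (Suc n) x"
    proof (cases "x \<in> space N")
      case True
      have "\<beta>*q x < cn (Suc n)" using bq[OF True] cn_gt[of "Suc n"] by linarith
      then have "w (cn n) x \<le> w (cn (Suc n)) x" unfolding w_def
        using w_anti[of \<alpha> \<beta> "q x" "cn (Suc n)" "cn n"] a0 b0 q0[OF True] cn_dec[of n] by auto
      then show ?thesis unfolding f_def using True by (simp add: ennreal_leI)
    next
      case False
      then show ?thesis unfolding f_def by simp
    qed
  qed
  have fm: "f n \<in> borel_measurable N" for n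
    unfolding f_def by measurable
  have fint: "integral\<^sup>N N (f n) = ennreal (G (cn n))" for n
  proof -
    have "integral\<^sup>N N (f n) = (\<integral>\<^sup>+x. ennreal (w (cn n) x) \<partial>N)"
      by (rule nn_integral_cong) (simp add: f_def)
    also have "\<dots> = ennreal (G (cn n))" unfolding G_def
      using wpos[OF cn_gt] by (intro nn_integral_eq_integral wint cn_gt AE_I2) (simp add: less_imp_le)
    finally show ?thesis .
  qed
  define g where "g x = (if q x = S then \<infinity> else ennreal (S/(S-q x)))" for x
  have pw: "ennreal \<alpha> * g x \<le> (SUP n. f n x)" if x: "x \<in> space N" for x
  proof (cases "q x = S")
    case True
    have "(SUP n. f n x) = \<top>"
    proof (rule ennreal_SUP_eq_top)
      fix m :: nat
      obtain i :: nat where i: "real m / (\<alpha>*\<beta>) < real i" using reals_Archimedean2 by blast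
      have ab: "0 < \<alpha>*\<beta>" using a0 b0 by simp
      have "real m \<le> \<alpha>*\<beta>*real i" using i ab by (simp add: field_simps)
      also have "\<dots> \<le> \<alpha>*\<beta>*real (Suc i)" using ab by (intro mult_left_mono) auto
      also have "\<dots> \<le> w (cn i) x"
      proof -
        have e: "cn i - \<beta>*q x = S / Suc i" unfolding cn_def True by simp
        have wi: "w (cn i) x = \<alpha> * cn i * Suc i / S" unfolding w_def e using S by (simp add: field_simps)
        moreover have "\<alpha> * (\<beta>*S) * Suc i \<le> \<alpha> * cn i * Suc i"
          using cn_gt[of i] a0 by (intro mult_right_mono mult_left_mono) auto
        then have "\<alpha> * (\<beta>*S) * Suc i / S \<le> \<alpha> * cn i * Suc i / S"
          using S by (intro divide_right_mono) auto
        moreover have "\<alpha> * (\<beta>*S) * Suc i / S = \<alpha>*\<beta>*real (Suc i)" using S by simp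
        ultimately show ?thesis by (metis wi)
      qed
      finally have "of_nat m \<le> f i x" unfolding f_def using x
        by (simp add: ennreal_of_nat_eq_real_of_nat ennreal_leI)
      then show "\<exists>i\<in>UNIV. of_nat m \<le> f i x" by blast
    qed
    then show ?thesis by (metis top_greatest)
  next
    case False
    then have qlt: "q x < S" using qS[OF x] by simp
    have lhs: "ennreal \<alpha> * g x = ennreal (\<alpha>*(\<beta>*S)/(\<beta>*S-\<beta>*q x))"
    proof -
      have "\<beta>*S-\<beta>*q x = \<beta>*(S-q x)" by (simp add: algebra_simps)
      then have "\<alpha>*(\<beta>*S)/(\<beta>*S-\<beta>*q x) = \<alpha>*(S/(S-q x))" using b0 qlt
        by simp
      moreover have "ennreal \<alpha> * ennreal (S/(S-q x)) = ennreal (\<alpha>*(S/(S-q x)))"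
        using a0 qlt S by (intro ennreal_mult[symmetric]) auto
      ultimately show ?thesis unfolding g_def using False by simp
    qed
    have "(\<lambda>n. w (cn n) x) \<longlonglongrightarrow> \<alpha>*(\<beta>*S)/(\<beta>*S-\<beta>*q x)"
      unfolding w_def using qlt b0
      by (intro tendsto_intros cn_lim) simp
    then have "(\<lambda>n. f n x) \<longlonglongrightarrow> ennreal (\<alpha>*(\<beta>*S)/(\<beta>*S-\<beta>*q x))"
      unfolding f_def using x by (simp add: tendsto_ennrealI)
    then show ?thesis unfolding lhs
      by (rule LIMSEQ_le_const2) (meson SUP_upper UNIV_I)
  qed
  have "1 < (\<integral>\<^sup>+x. ennreal \<alpha> * g x \<partial>N)" using cond unfolding g_def .
  also have "\<dots> \<le> (\<integral>\<^sup>+x. (SUP n. f n x) \<partial>N)" by (rule nn_integral_mono) (rule pw)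
  also have "\<dots> = (SUP n. integral\<^sup>N N (f n))"
    by (rule nn_integral_monotone_convergence_SUP[OF finc fm])
  finally obtain n where n: "1 < ennreal (G (cn n))" unfolding fint by (auto simp: less_SUP_iff)
  then have Gn: "1 < G (cn n)" by (simp add: one_less_ennreal)
  have G2: "G (2*S) < 1"
  proof -
    have bS: "\<beta>*S < 2*S" using b0 S by simp
    have "G (2*S) \<le> (\<integral>x. \<alpha>*(2*S)/(2*S-\<beta>*S) \<partial>N)" unfolding G_def
      using wbd[OF bS] wint[OF bS] by (intro integral_mono) auto
    also have "\<dots> = \<alpha>*(2*S)/(2*S-\<beta>*S)" by (simp add: prob_space)
    also have "\<dots> < 1"
    proof -
      have "2*S-\<beta>*S > 0" using bS by simp
      moreover have "\<alpha>*(2*S) < 2*S-\<beta>*S" using S a0 a1 by (simp add: \<beta>_def algebra_simps)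
      ultimately show ?thesis by simp
    qed
    finally show ?thesis .
  qed
  define K where "K = \<alpha>*\<beta>*S/(cn n-\<beta>*S)^2"
  have K: "0 < K" unfolding K_def using a0 b0 S cn_gt[of n] by simp
  have cont: "continuous_on {cn n..2*S} G"
    unfolding continuous_on_iff
  proof (intro ballI allI impI)
    fix c e :: real assume c: "c \<in> {cn n..2*S}" and e: "0 < e"
    show "\<exists>d>0. \<forall>c'\<in>{cn n..2*S}. dist c' c < d \<longrightarrow> dist (G c') (G c) < e"
    proof (intro exI[of _ "e/K"] conjI ballI impI)
      show "0 < e/K" using e K by simp
      fix c' assume c': "c' \<in> {cn n..2*S}" and d: "dist c' c < e/K"
      have "dist (G c') (G c) \<le> K * dist c' c"
        unfolding dist_real_def K_def using c c' cn_gt[of n] by (intro Glip) auto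
      also have "\<dots> < K * (e/K)" using K d by (intro mult_strict_left_mono) auto
      also have "\<dots> = e" using K by simp
      finally show "dist (G c') (G c) < e" .
    qed
  qed
  obtain c where c: "cn n \<le> c" "c \<le> 2*S" "G c = 1"
    using IVT2'[of G "2*S" 1 "cn n", OF _ _ cn_le cont] G2 Gn by auto
  have "(1-\<alpha>)*S < c" using cn_gt[of n] c by (simp add: \<beta>_def)
  moreover have "(\<integral>x. \<alpha>*c/(c-(1-\<alpha>)*q x) \<partial>N) = 1" using c unfolding G_def w_def \<beta>_def by simp
  ultimately show ?thesis by blast
qed


lemma q_zero:
  fixes N :: "'a measure" and q :: "'a \<Rightarrow> real"
  assumes qm[measurable]: "q \<in> borel_measurable N"
    and q0: "AE x in N. 0 \<le> q x" and a0: "0 < \<alpha>" and b0: "0 \<le> \<beta>" "\<beta> \<noteq> 0"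
    and ab: "a < b" and qa: "AE x in N. \<beta>*q x < a"
    and ia: "integrable N (\<lambda>x. \<alpha>*a/(a-\<beta>*q x))" and ib: "integrable N (\<lambda>x. \<alpha>*b/(b-\<beta>*q x))"
    and eq: "(\<integral>x. \<alpha>*a/(a-\<beta>*q x) \<partial>N) = (\<integral>x. \<alpha>*b/(b-\<beta>*q x) \<partial>N)"
  shows "AE x in N. q x = 0"
proof -
  have "(\<integral>x. \<alpha>*a/(a-\<beta>*q x) - \<alpha>*b/(b-\<beta>*q x) \<partial>N) = 0"
    using eq ia ib by (subst Bochner_Integration.integral_diff) auto
  moreover have "AE x in N. 0 \<le> \<alpha>*a/(a-\<beta>*q x) - \<alpha>*b/(b-\<beta>*q x)"
    using q0 qa
  proof eventually_elim
    case (elim x)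
    then show ?case using w_anti[of \<alpha> \<beta> "q x" a b] a0 b0 ab by auto
  qed
  ultimately have "AE x in N. \<alpha>*a/(a-\<beta>*q x) - \<alpha>*b/(b-\<beta>*q x) = 0"
    using ia ib by (subst integral_nonneg_eq_0_iff_AE[symmetric]) (auto intro!: Bochner_Integration.integrable_diff)
  then show ?thesis using qa
  proof eventually_elim
    case (elim x)
    have d: "a - \<beta>*q x > 0" "b - \<beta>*q x > 0" using elim ab by auto
    have "\<alpha>*a*(b-\<beta>*q x) = \<alpha>*b*(a-\<beta>*q x)" using elim(1) d by (simp add: divide_simps)
    then have "\<alpha>*\<beta>*q x*(b-a) = 0" by (simp add: algebra_simps)
    then show ?case using a0 b0 ab by simp
  qed
qed

lemma uniq_core:
  fixes N :: "'a measure" and q w' :: "'a \<Rightarrow> real"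
  assumes N: "prob_space N" and qm[measurable]: "q \<in> borel_measurable N"
    and q0: "\<And>x. x \<in> space N \<Longrightarrow> 0 \<le> q x" and qS: "\<And>x. x \<in> space N \<Longrightarrow> q x \<le> S"
    and a0: "0 < \<alpha>" and a1: "\<alpha> < 1" and c: "(1-\<alpha>)*S < c" and S0: "0 \<le> S"
    and Gc: "(\<integral>x. \<alpha>*c/(c-(1-\<alpha>)*q x) \<partial>N) = 1"
    and wm[measurable]: "w' \<in> borel_measurable N" and wi: "integrable N w'" and w1: "(\<integral>x. w' x \<partial>N) = 1"
    and we: "AE x in N. w' x = \<alpha>*c'/(c'-(1-\<alpha>)*q x)" and wc: "AE x in N. (1-\<alpha>)*q x < c'"
  shows "AE x in N. w' x = \<alpha>*c/(c-(1-\<alpha>)*q x)"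
proof -
  interpret prob_space N by fact
  define \<beta> where "\<beta> = 1-\<alpha>"
  have b0: "0 < \<beta>" using a1 by (simp add: \<beta>_def)
  have bq: "\<beta>*q x \<le> \<beta>*S" if "x \<in> space N" for x using qS[OF that] b0 by simp
  have c0: "0 < c" using c b0 S0 unfolding \<beta>_def[symmetric]
    by (smt (verit) mult_nonneg_nonneg)
  have qc: "AE x in N. \<beta>*q x < c" using bq c unfolding \<beta>_def[symmetric] by (intro AE_I2) (meson le_less_trans)
  have ic: "integrable N (\<lambda>x. \<alpha>*c/(c-\<beta>*q x))"
  proof (rule integrable_const_bound)
    show "AE x in N. norm (\<alpha>*c/(c-\<beta>*q x)) \<le> \<alpha>*c/(c-\<beta>*S)"
    proof (intro AE_I2)
      fix x assume x: "x \<in> space N"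
      have "c - \<beta>*S > 0" using c by (simp add: \<beta>_def)
      then show "norm (\<alpha>*c/(c-\<beta>*q x)) \<le> \<alpha>*c/(c-\<beta>*S)"
        using bq[OF x] a0 c0 by (auto intro!: divide_left_mono)
    qed
  qed simp
  have ic': "integrable N (\<lambda>x. \<alpha>*c'/(c'-\<beta>*q x))"
    using wi we by (subst integrable_cong_AE[symmetric]) (auto simp: \<beta>_def)
  have Gc': "(\<integral>x. \<alpha>*c'/(c'-\<beta>*q x) \<partial>N) = 1"
    using w1 we by (subst integral_cong_AE[of _ _ w']) (auto simp: \<beta>_def)
  have q0': "AE x in N. 0 \<le> q x" using q0 by (intro AE_I2) auto
  have "c' = c"
  proof (rule ccontr)
    assume ne: "c' \<noteq> c"
    have "AE x in N. q x = 0"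
    proof (cases "c < c'")
      case True
      show ?thesis by (rule q_zero[OF qm q0' a0 less_imp_le[OF b0] _ True qc ic ic'])
        (use b0 Gc Gc' in \<open>auto simp: \<beta>_def\<close>)
    next
      case False
      then have "c' < c" using ne by simp
      show ?thesis by (rule q_zero[OF qm q0' a0 less_imp_le[OF b0] _ \<open>c' < c\<close> _ ic' ic])
        (use b0 Gc Gc' wc in \<open>auto simp: \<beta>_def\<close>)
    qed
    then have "AE x in N. \<alpha>*c/(c-\<beta>*q x) = \<alpha>"
    proof eventually_elim
      case (elim x) then show ?case using c0 by simp
    qed
    then have "(\<integral>x. \<alpha>*c/(c-\<beta>*q x) \<partial>N) = (\<integral>x. \<alpha> \<partial>N)"
      by (intro integral_cong_AE) auto
    also have "\<dots> = \<alpha>" by (simp add: prob_space)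
    finally show False using Gc a1 by (simp add: \<beta>_def)
  qed
  then show ?thesis using we by simp
qed


lemma inv_lt_ennreal:
  fixes I :: ennreal
  assumes a0: "0 < \<alpha>" and h: "inverse I < ennreal \<alpha>"
  shows "1 < ennreal \<alpha> * I"
proof (cases I)
  case (real i)
  show ?thesis
  proof (cases "i = 0")
    case True
    then show ?thesis using h real by simp
  next
    case False
    then have i0: "0 < i" using real by simp
    then have "inverse i < \<alpha>" using h real a0 by (simp add: inverse_ennreal ennreal_less_iff)
    then have "1 < \<alpha> * i" using i0 by (simp add: field_simps)
    then show ?thesis using real i0 a0 by (simp add: ennreal_mult''[symmetric])
  qed
next
  case top
  then show ?thesis using a0 by (simp add: ennreal_mult_top)
qed




theorem lemma8:
  fixes M :: "'a measure" and r :: "'a \<Rightarrow> real" and P :: "'w measure"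
    and eps :: "'a \<Rightarrow> 'w \<Rightarrow> real" and \<alpha> :: real and p :: "'a \<Rightarrow> real"
  defines "Q \<equiv> Qfun r eps P"
  defines "Qs \<equiv> esssup M Q"
  assumes "sigma_finite_measure M"
    and "r \<in> borel_measurable M"
    and "prob_space P"
    and "\<And>x. x \<in> space M \<Longrightarrow> eps x \<in> borel_measurable P"
    and "Q \<in> borel_measurable M"
    and "0 < \<alpha>" and "\<alpha> < 1"
    and "p \<in> prob_densities M"
    and "0 < Qs" and "Qs < \<infinity>"
    and "\<And>x. x \<in> space M \<Longrightarrow> Q x \<le> Qs"
    and "ennreal \<alpha> > inverse (\<integral>\<^sup>+ x. (if Q x = Qs then \<infinity> else Qs / (Qs - Q x)) * ennreal (p x) \<partial>M)"
  shows "\<exists>w. w \<in> prob_densities (Pref M p) \<and> w \<in> pos_cone M p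
           \<and> (AE x in Pref M p. LNop M p \<alpha> (\<lambda>x. enn2real (Q x)) w x = w x)
           \<and> (\<forall>w'. w' \<in> prob_densities (Pref M p) \<and> w' \<in> pos_cone M p
                  \<and> (AE x in Pref M p. LNop M p \<alpha> (\<lambda>x. enn2real (Q x)) w' x = w' x)
                  \<longrightarrow> (AE x in Pref M p. w' x = w x))
           \<and> (1 - \<alpha>) * enn2real Qs < inner_ref M p w (\<lambda>x. enn2real (Q x))
           \<and> inner_ref M p w (\<lambda>x. enn2real (Q x)) \<le> enn2real Qs"
  proof -
  note Qm[measurable] = assms(7)
  have pm[measurable]: "p \<in> borel_measurable M" and p0: "AE x in M. 0 \<le> p x"
    and p1: "(\<integral>\<^sup>+ x. ennreal (p x) \<partial>M) = 1"
    using assms(10) by (auto simp: prob_densities_def)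
  define N where "N = Pref M p"
  have sN: "sets N = sets M" "space N = space M" by (simp_all add: N_def Pref_def)
  have bmN: "measurable N borel = measurable M borel"
    by (rule measurable_cong_sets) (simp_all add: sN)
  have probN: "prob_space N"
  proof (rule prob_spaceI)
    have "emeasure N (space N) = (\<integral>\<^sup>+ x. ennreal (p x) * indicator (space M) x \<partial>M)"
      by (simp add: N_def Pref_def emeasure_density)
    also have "\<dots> = (\<integral>\<^sup>+ x. ennreal (p x) \<partial>M)"
      by (rule nn_integral_cong) simp
    finally show "emeasure N (space N) = 1" using p1 by simp
  qed
  interpret N: prob_space N by (rule probN)
  define q where "q x = enn2real (Q x)" for x
  define S where "S = enn2real Qs"
  have QsS: "Qs = ennreal S" unfolding S_def using assms(12) by simp
  have S0: "0 < S" using assms(11) QsS by simp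
  have Qq: "Q x = ennreal (q x)" if "x \<in> space M" for x
  proof -
    have "Q x < \<infinity>" using assms(13)[OF that] assms(12) by (rule le_less_trans)
    then show ?thesis unfolding q_def by simp
  qed
  have q0: "0 \<le> q x" for x unfolding q_def by simp
  have qS: "q x \<le> S" if "x \<in> space M" for x
    using assms(13)[OF that] Qq[OF that] QsS S0 by (simp add: ennreal_le_iff)
  have qmM[measurable]: "q \<in> borel_measurable M" unfolding q_def by measurable
  have qm: "q \<in> borel_measurable N" unfolding bmN by (rule qmM)
  define g where "g x = (if q x = S then \<infinity> else ennreal (S/(S-q x)))" for x
  have gm[measurable]: "g \<in> borel_measurable M" unfolding g_def by measurable
  have "(\<integral>\<^sup>+ x. (if Q x = Qs then \<infinity> else Qs / (Qs - Q x)) * ennreal (p x) \<partial>M)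
      = (\<integral>\<^sup>+ x. ennreal (p x) * g x \<partial>M)"
  proof (rule nn_integral_cong)
    fix x assume x: "x \<in> space M"
    have e: "(Q x = Qs) = (q x = S)" using Qq[OF x] QsS q0 S0 by simp
    show "(if Q x = Qs then \<infinity> else Qs / (Qs - Q x)) * ennreal (p x) = ennreal (p x) * g x"
    proof (cases "q x = S")
      case True then show ?thesis using e by (simp add: g_def mult.commute)
    next
      case False
      then have "q x < S" using qS[OF x] by simp
      then have "Qs / (Qs - Q x) = ennreal (S/(S-q x))"
        using Qq[OF x] QsS q0 S0 by (simp add: ennreal_minus divide_ennreal)
      then show ?thesis using e False by (simp add: g_def mult.commute)
    qed
  qed
  also have "\<dots> = (\<integral>\<^sup>+ x. g x \<partial>N)"
    unfolding N_def Pref_def by (rule nn_integral_density[symmetric]) auto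
  finally have "inverse (\<integral>\<^sup>+ x. g x \<partial>N) < ennreal \<alpha>" using assms(14) by simp
  then have "1 < ennreal \<alpha> * (\<integral>\<^sup>+ x. g x \<partial>N)" by (rule inv_lt_ennreal[OF assms(8)])
  also have "\<dots> = (\<integral>\<^sup>+ x. ennreal \<alpha> * g x \<partial>N)"
    using gm unfolding bmN[symmetric] by (subst nn_integral_cmult) auto
  finally have cond: "1 < (\<integral>\<^sup>+x. ennreal \<alpha> * (if q x = S then \<infinity> else ennreal (S/(S-q x))) \<partial>N)"
    unfolding g_def .
  obtain c where c: "(1-\<alpha>)*S < c" and Gc: "(\<integral>x. \<alpha>*c/(c-(1-\<alpha>)*q x) \<partial>N) = 1"
    using exist_c[OF probN qm _ _ S0 assms(8,9) cond] q0 qS sN by auto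
  define \<beta> where "\<beta> = 1 - \<alpha>"
  have b0: "0 < \<beta>" using assms(9) by (simp add: \<beta>_def)
  have bS: "\<beta>*S < c" using c by (simp add: \<beta>_def)
  have c0: "0 < c" using bS b0 S0 by (smt (verit) mult_pos_pos)
  define w where "w x = \<alpha>*c/(c-\<beta>*q x)" for x
  have bq: "\<beta>*q x \<le> \<beta>*S" if "x \<in> space M" for x using qS[OF that] b0 by simp
  have den: "0 < c - \<beta>*q x" if "x \<in> space M" for x using bq[OF that] bS by simp
  have wpos: "0 < w x" if "x \<in> space M" for x
    unfolding w_def using den[OF that] c0 assms(8) by simp
  have wle: "w x \<le> \<alpha>*c/(c-\<beta>*S)" if "x \<in> space M" for x
    unfolding w_def using den[OF that] bq[OF that] bS c0 assms(8)
    by (intro divide_left_mono) auto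
  have wmM[measurable]: "w \<in> borel_measurable M" unfolding w_def by measurable
  have wm: "w \<in> borel_measurable N" unfolding bmN by (rule wmM)
  have wint: "integrable N w"
  proof (rule N.integrable_const_bound)
    show "AE x in N. norm (w x) \<le> \<alpha>*c/(c-\<beta>*S)"
      using wpos wle sN by (intro AE_I2) (simp add: less_imp_le)
  qed (rule wm)
  have w1: "(\<integral>x. w x \<partial>N) = 1" using Gc unfolding w_def \<beta>_def .
  have wqint: "integrable N (\<lambda>x. w x * q x)"
  proof (rule Bochner_Integration.integrable_bound[of _ "\<lambda>x. S * w x"])
    show "integrable N (\<lambda>x. S * w x)" using wint by simp
    show "(\<lambda>x. w x * q x) \<in> borel_measurable N" using wm qm by simp
    show "AE x in N. norm (w x * q x) \<le> norm (S * w x)"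
      using wpos q0 qS sN S0 by (intro AE_I2) (simp add: abs_mult mult.commute mult_left_mono less_imp_le)
  qed
  have key: "\<alpha>*c + \<beta>*(w x * q x) = w x * c" if "x \<in> space M" for x
    unfolding w_def using den[OF that] by (simp add: field_simps)
  have inner: "inner_ref M p w q = c"
  proof -
    have "\<beta> * (\<integral>x. w x * q x \<partial>N) = (\<integral>x. \<beta> * (w x * q x) \<partial>N)" by simp
    also have "\<dots> = (\<integral>x. w x * c - \<alpha>*c \<partial>N)"
      by (rule Bochner_Integration.integral_cong) (use key sN in \<open>auto simp: algebra_simps\<close>)
    also have "\<dots> = (\<integral>x. w x * c \<partial>N) - (\<integral>x. \<alpha>*c \<partial>N)"
      using wint by (subst Bochner_Integration.integral_diff) auto
    also have "\<dots> = c - \<alpha>*c" using w1 by (simp add: N.prob_space)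
    also have "\<dots> = \<beta> * c" by (simp add: \<beta>_def algebra_simps)
    finally have "(\<integral>x. w x * q x \<partial>N) = c" using b0 by simp
    then show ?thesis unfolding inner_ref_def N_def .
  qed
  have qeq: "(\<lambda>x. enn2real (Q x)) = q" by (simp add: q_def fun_eq_iff)
  have Nd: "Pref M p = N" by (simp add: N_def)
  show ?thesis unfolding qeq Nd
  proof (intro exI[of _ w] conjI allI impI)
    have wn: "(\<integral>\<^sup>+ x. ennreal (w x) \<partial>N) = 1"
    proof -
      have "AE x in N. 0 \<le> w x" using wpos sN by (intro AE_I2) (simp add: less_imp_le)
      then show ?thesis using nn_integral_eq_integral[OF wint] w1 by simp
    qed
    show "w \<in> prob_densities N"
      unfolding prob_densities_def using wm wpos sN wn
      by (auto intro!: AE_I2 less_imp_le)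
    show "w \<in> pos_cone M p" unfolding pos_cone_def Nd using wint wpos sN by (auto intro!: AE_I2)
    show "AE x in N. LNop M p \<alpha> q w x = w x"
    proof (rule AE_I2)
      fix x assume x: "x \<in> space N"
      show "LNop M p \<alpha> q w x = w x" unfolding LNop_def Lop_def inner
        using key[of x] x sN c0 by (simp add: \<beta>_def field_simps)
    qed
    show "(1 - \<alpha>) * enn2real Qs < inner_ref M p w q" using c inner by (simp add: S_def)
    show "inner_ref M p w q \<le> enn2real Qs"
    proof -
      have "(\<integral>x. w x * q x \<partial>N) \<le> (\<integral>x. w x * S \<partial>N)"
        using wqint wint wpos qS sN by (intro integral_mono) (auto intro!: mult_left_mono less_imp_le)
      also have "\<dots> = S" using w1 by simp
      finally show ?thesis unfolding inner_ref_def Nd S_def .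
    qed
    fix w' assume h: "w' \<in> prob_densities N \<and> w' \<in> pos_cone M p \<and> (AE x in N. LNop M p \<alpha> q w' x = w' x)"
    have w'm: "w' \<in> borel_measurable N" and w'i: "integrable N w'" and w'p: "AE x in N. 0 < w' x"
      and w'n: "(\<integral>\<^sup>+ x. ennreal (w' x) \<partial>N) = 1" and fp: "AE x in N. LNop M p \<alpha> q w' x = w' x"
    proof -
      have h1: "w' \<in> prob_densities N" and h2: "w' \<in> pos_cone M p"
        and h3: "AE x in N. LNop M p \<alpha> q w' x = w' x" using h by auto
      have h2': "integrable N w' \<and> (AE x in N. 0 < w' x)" using h2 unfolding pos_cone_def Nd by simp
      show "w' \<in> borel_measurable N" "integrable N w'" "AE x in N. 0 < w' x"
        "(\<integral>\<^sup>+ x. ennreal (w' x) \<partial>N) = 1" "AE x in N. LNop M p \<alpha> q w' x = w' x"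
        using h1 h2' h3 unfolding prob_densities_def by auto
    qed
    have w'1: "(\<integral>x. w' x \<partial>N) = 1"
      using w'm w'p w'n by (subst integral_eq_nn_integral) (auto elim: AE_mp)
    define c' where "c' = inner_ref M p w' q"
    have c'def: "c' = (\<integral>x. w' x * q x \<partial>N)" unfolding c'_def inner_ref_def Nd ..
    have "AE x in N. 0 \<le> w' x * q x" using w'p
    proof eventually_elim
      case (elim x) then show ?case using q0[of x] by simp
    qed
    then have "0 \<le> c'" unfolding c'def by (rule integral_nonneg_AE)
    moreover have "c' \<noteq> 0"
    proof
      assume z: "c' = 0"
      have "AE x in N. False" using fp w'p
      proof eventually_elim
        case (elim x) then show ?case using z by (simp add: LNop_def c'_def[symmetric])
      qed
      then show False by simp
    qed
    ultimately have c'0: "0 < c'" by simp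
    have fp2: "AE x in N. w' x = \<alpha>*c'/(c'-(1-\<alpha>)*q x) \<and> (1-\<alpha>)*q x < c'"
      using fp w'p
    proof eventually_elim
      case (elim x)
      have "\<alpha>*c' + (1-\<alpha>)*w' x*q x = w' x * c'"
        using elim(1) c'0 unfolding LNop_def Lop_def c'_def[symmetric] by (simp add: field_simps)
      then have e: "w' x * (c' - (1-\<alpha>)*q x) = \<alpha>*c'" by (simp add: algebra_simps)
      then have "0 < w' x * (c' - (1-\<alpha>)*q x)" using c'0 assms(8) by simp
      then have d: "0 < c' - (1-\<alpha>)*q x" using elim(2) by (simp add: zero_less_mult_iff)
      then show ?case using e by (simp add: field_simps)
    qed
    have "AE x in N. w' x = \<alpha>*c/(c-(1-\<alpha>)*q x)"
      by (rule uniq_core[OF probN qm _ _ assms(8,9) c _ Gc w'm w'i w'1, where c'=c'])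
        (use q0 qS sN S0 fp2 in \<open>auto elim: AE_mp\<close>)
    then show "AE x in N. w' x = w x" by (simp add: w_def \<beta>_def)
  qed
qed

end
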